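(* Let $\nu$ be an eigenvalue of the nonlocal problem with $\nu\notin\{\lambda_n\}_{n\in\mathbb N_0}$. Then $\nu$ solves $$\frac1M=\sum_{n\in\mathbb N_0}\frac{\beta_n^2}{\lambda_n-\nu},\qquad \beta_n=\int_0^1C(y)\psi_n(y)\,dy.$$ Conversely, if $\nu\in\mathbb R$ solves this equation, then $\nu$ is an eigenvalue of the nonlocal problem.
   Context: $\mathbb{T}=[0,1]$ with endpoints identified; $D,\kappa>0$; $U\in W^{2,2}(\mathbb{T})$ is a nonconstant solution of $0=DU_{xx}-U+\kappa e^U/\int_0^1e^Udy$ (periodic). Set $A(x)=\kappa\frac{e^{U(x)}}{\int_0^1e^U}-1$, $M=\frac{\kappa}{(\int_0^1e^U)^2}>0$, $C(x)=e^{U(x)}$. Nonlocal eigenvalue problem: $D\varphi_{xx}+(A(x)-\nu)\varphi=MC(x)\int_0^1C(y)\varphi(y)dy$, $\varphi\not\equiv0$, periodic boundary conditions. Local problem: $D\psi_{xx}+(A(x)-\lambda)\psi=0$, periodic; its eigenpairs $(\lambda_n,\psi_n)_{n\in\mathbb N_0}$ are real with $\{\psi_n\}$ an orthonormal basis of $L^2(0,1)$ and $\lambda_0>\lambda_1\ge\lambda_2>\lambda_3\ge\lambda_4>\cdots$. *)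

theory Defs
  imports "HOL-Analysis.Analysis"
begin

text \<open>Functions on the circle T = [0,1] with endpoints identified are represented
as 1-periodic functions on the real line.\<close>

definition per1 :: "(real \<Rightarrow> real) \<Rightarrow> bool" where
  "per1 f \<longleftrightarrow> (\<forall>x. f (x + 1) = f x)"

definition twice_diff :: "(real \<Rightarrow> real) \<Rightarrow> bool" where
  "twice_diff f \<longleftrightarrow> (\<forall>x. f differentiable at x) \<and> (\<forall>x. deriv f differentiable at x)"

definition L2_01 :: "(real \<Rightarrow> real) \<Rightarrow> bool" where
  "L2_01 f \<longleftrightarrow> f \<in> borel_measurable (lebesgue_on {0..1}) \<and>
     integrable (lebesgue_on {0..1}) (\<lambda>x. (f x)\<^sup>2)"

definition ip01 :: "(real \<Rightarrow> real) \<Rightarrow> (real \<Rightarrow> real) \<Rightarrow> real" where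
  "ip01 f g = integral\<^sup>L (lebesgue_on {0..1}) (\<lambda>x. f x * g x)"

definition ONB01 :: "(nat \<Rightarrow> real \<Rightarrow> real) \<Rightarrow> bool" where
  "ONB01 \<psi> \<longleftrightarrow> (\<forall>n. L2_01 (\<psi> n)) \<and>
     (\<forall>m n. ip01 (\<psi> m) (\<psi> n) = (if m = n then 1 else 0)) \<and>
     (\<forall>f. L2_01 f \<longrightarrow>
        (\<lambda>N. ip01 (\<lambda>x. f x - (\<Sum>n<N. ip01 f (\<psi> n) * \<psi> n x))
                   (\<lambda>x. f x - (\<Sum>n<N. ip01 f (\<psi> n) * \<psi> n x))) \<longlonglongrightarrow> 0)"

definition Zc :: "(real \<Rightarrow> real) \<Rightarrow> real" where
  "Zc U = integral {0..1} (\<lambda>y. exp (U y))"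

definition Acoef :: "real \<Rightarrow> (real \<Rightarrow> real) \<Rightarrow> real \<Rightarrow> real" where
  "Acoef \<kappa> U x = \<kappa> * exp (U x) / Zc U - 1"

definition Mc :: "real \<Rightarrow> (real \<Rightarrow> real) \<Rightarrow> real" where
  "Mc \<kappa> U = \<kappa> / (Zc U)\<^sup>2"

definition Cf :: "(real \<Rightarrow> real) \<Rightarrow> real \<Rightarrow> real" where
  "Cf U x = exp (U x)"

definition steady_state :: "real \<Rightarrow> real \<Rightarrow> (real \<Rightarrow> real) \<Rightarrow> bool" where
  "steady_state D \<kappa> U \<longleftrightarrow> per1 U \<and> twice_diff U \<and>
     (\<forall>x. D * deriv (deriv U) x - U x + \<kappa> * exp (U x) / Zc U = 0) \<and>
     \<not> (\<exists>c. \<forall>x. U x = c)"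

definition nonlocal_eig :: "real \<Rightarrow> real \<Rightarrow> (real \<Rightarrow> real) \<Rightarrow> real \<Rightarrow> bool" where
  "nonlocal_eig D \<kappa> U \<nu> \<longleftrightarrow> (\<exists>\<phi>. per1 \<phi> \<and> twice_diff \<phi> \<and> (\<exists>x. \<phi> x \<noteq> 0) \<and>
     (\<forall>x. D * deriv (deriv \<phi>) x + (Acoef \<kappa> U x - \<nu>) * \<phi> x =
          Mc \<kappa> U * Cf U x * integral {0..1} (\<lambda>y. Cf U y * \<phi> y)))"

definition local_eigpair :: "real \<Rightarrow> real \<Rightarrow> (real \<Rightarrow> real) \<Rightarrow> real \<Rightarrow> (real \<Rightarrow> real) \<Rightarrow> bool" where
  "local_eigpair D \<kappa> U lam \<psi> \<longleftrightarrow> per1 \<psi> \<and> twice_diff \<psi> \<and> (\<exists>x. \<psi> x \<noteq> 0) \<and>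
     (\<forall>x. D * deriv (deriv \<psi>) x + (Acoef \<kappa> U x - lam) * \<psi> x = 0)"

end

theory Submission
  imports Defs
begin
definition sint :: "(real \<Rightarrow> real) \<Rightarrow> real \<Rightarrow> real" where
  "sint g x = (if 0 \<le> x then integral {0..x} g else - integral {x..0} g)"

lemma sint_eq:
  assumes g: "continuous_on UNIV g" and "a \<le> 0" "a \<le> x"
  shows "sint g x = integral {a..x} g - integral {a..0} g"
proof (cases "0 \<le> x")
  case True
  have "integral {a..0} g + integral {0..x} g = integral {a..x} g"
    by (rule Henstock_Kurzweil_Integration.integral_combine)
       (use True assms in \<open>auto intro!: integrable_continuous_real continuous_on_subset[OF g]\<close>)
  then show ?thesis using True by (simp add: sint_def)
next
  case False
  have "integral {a..x} g + integral {x..0} g = integral {a..0} g"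
    by (rule Henstock_Kurzweil_Integration.integral_combine)
       (use False assms in \<open>auto intro!: integrable_continuous_real continuous_on_subset[OF g]\<close>)
  then show ?thesis using False by (simp add: sint_def)
qed

lemma sint_deriv:
  assumes g: "continuous_on UNIV g"
  shows "(sint g has_real_derivative g x) (at x)"
proof -
  define a where "a = - \<bar>x\<bar> - 1"
  define b where "b = \<bar>x\<bar> + 1"
  have xin: "x \<in> {a<..<b}" by (auto simp: a_def b_def)
  have "((\<lambda>y. integral {a..y} g - integral {a..0} g) has_real_derivative g x) (at x within {a..b})"
    using integral_has_real_derivative[of a b g x] xin continuous_on_subset[OF g]
    by (auto intro!: derivative_eq_intros)
  moreover have "at x within {a..b} = at x"
    using xin by (intro at_within_interior) auto
  ultimately have "((\<lambda>y. integral {a..y} g - integral {a..0} g) has_real_derivative g x) (at x)"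
    by simp
  then show ?thesis
    by (rule has_field_derivative_transform_within_open[where S="{a<..<b}"])
       (use xin in \<open>auto simp: a_def intro!: sint_eq[OF g, symmetric]\<close>)
qed

lemma sint_0[simp]: "sint g 0 = 0"
  by (simp add: sint_def)

lemma sint_cont: "continuous_on UNIV g \<Longrightarrow> continuous_on UNIV (sint g)"
  by (meson DERIV_isCont continuous_at_imp_continuous_on sint_deriv)

lemma sint_diff:
  assumes f: "continuous_on UNIV f" and g: "continuous_on UNIV g"
  shows "sint (\<lambda>t. f t - g t) x = sint f x - sint g x"
proof -
  have i: "h integrable_on {a..b}" if "continuous_on UNIV h" for h :: "real \<Rightarrow> real" and a b :: real
    by (rule integrable_continuous_real) (rule continuous_on_subset[OF that], auto)
  show ?thesis
    using integral_diff[OF i[OF f] i[OF g], of 0 x] integral_diff[OF i[OF f] i[OF g], of x 0]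
    by (auto simp: sint_def)
qed


lemma sint_bound:
  assumes g: "continuous_on UNIV g" and L: "L > 0"
    and gb: "\<And>t. \<bar>g t\<bar> \<le> K * exp (L * \<bar>t\<bar>)"
  shows "\<bar>sint g x\<bar> \<le> K * exp (L * \<bar>x\<bar>) / L"
proof -
  have K: "K \<ge> 0" using gb[of 0] by simp
  have d: "\<And>y. (sint g has_real_derivative g y) (at y)" using sint_deriv[OF g] .
  show ?thesis
  proof (cases "0 \<le> x")
    case True
    have "K * exp (L * 0) / L - sint g 0 \<le> K * exp (L * x) / L - sint g x"
      apply (rule DERIV_nonneg_imp_nondecreasing[OF True])
      subgoal for y
        apply (rule exI[where x="K * exp (L * y) - g y"])
        using gb[of y] L by (auto intro!: derivative_eq_intros d)
      done
    moreover have "K * exp (L * 0) / L + sint g 0 \<le> K * exp (L * x) / L + sint g x"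
      apply (rule DERIV_nonneg_imp_nondecreasing[OF True])
      subgoal for y
        apply (rule exI[where x="K * exp (L * y) + g y"])
        using gb[of y] L by (auto intro!: derivative_eq_intros d simp: abs_le_iff)
      done
    ultimately show ?thesis using True divide_nonneg_pos[OF K L] by (simp add: abs_le_iff)
  next
    case False
    then have x0: "x \<le> 0" by simp
    have "K * exp (- L * 0) / L - sint g 0 \<le> K * exp (- L * x) / L - sint g x"
      apply (rule DERIV_nonpos_imp_nonincreasing[OF x0])
      subgoal for y
        apply (rule exI[where x="- K * exp (- L * y) - g y"])
        using gb[of y] L by (auto intro!: derivative_eq_intros d simp: abs_le_iff)
      done
    moreover have "K * exp (- L * 0) / L + sint g 0 \<le> K * exp (- L * x) / L + sint g x"
      apply (rule DERIV_nonpos_imp_nonincreasing[OF x0])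
      subgoal for y
        apply (rule exI[where x="- K * exp (- L * y) + g y"])
        using gb[of y] L by (auto intro!: derivative_eq_intros d simp: abs_le_iff)
      done
    ultimately show ?thesis using x0 divide_nonneg_pos[OF K L] by (simp add: abs_le_iff)
  qed
qed

lemma exp_ge_abs: "L \<ge> 1 \<Longrightarrow> \<bar>x\<bar> \<le> exp (L * \<bar>x::real\<bar>)"
proof -
  assume L: "L \<ge> 1"
  have "\<bar>x\<bar> \<le> L * \<bar>x\<bar>" using L by (simp add: mult_le_cancel_right1)
  also have "\<dots> \<le> 1 + L * \<bar>x\<bar>" by simp
  also have "\<dots> \<le> exp (L * \<bar>x\<bar>)" by (rule exp_ge_add_one_self)
  finally show ?thesis .
qed

lemma ivp_exists:
  fixes p h :: "real \<Rightarrow> real"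
  assumes cp: "continuous_on UNIV p" and ch: "continuous_on UNIV h"
    and pb: "\<And>x. \<bar>p x\<bar> \<le> P" and hb: "\<And>x. \<bar>h x\<bar> \<le> H"
  shows "\<exists>y y'. (\<forall>x. (y has_real_derivative y' x) (at x) \<and>
            (y' has_real_derivative (h x - p x * y x)) (at x)) \<and> y 0 = a \<and> y' 0 = b"
proof -
  have P0: "P \<ge> 0" using pb[of 0] by simp
  have H0: "H \<ge> 0" using hb[of 0] by simp
  define L where "L = 2 * P + 2"
  have L1: "L \<ge> 1" and L0: "L > 0" using P0 by (auto simp: L_def)
  have LL: "2 * P \<le> L * L"
  proof -
    have "2 * P \<le> L" using P0 by (simp add: L_def)
    also have "L \<le> L * L" using L1 by (simp add: mult_le_cancel_left1)
    finally show ?thesis .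
  qed
  define E where "E t = exp (L * \<bar>t\<bar>)" for t
  have E1: "E t \<ge> 1" for t using L0 by (simp add: E_def)
  have Epos: "E t > 0" for t by (simp add: E_def)
  have cE: "continuous_on UNIV E" unfolding E_def by (intro continuous_intros)
  define q where "q w t = h t - p t * (E t * apply_bcontfun w t)" for w :: "real \<Rightarrow>\<^sub>C real" and t
  define G where "G w x = a + b * x + sint (\<lambda>s. sint (q w) s) x" for w x
  have cq: "continuous_on UNIV (q w)" for w
    unfolding q_def by (intro continuous_intros cp ch cE) auto
  have csq: "continuous_on UNIV (\<lambda>s. sint (q w) s)" for w
    using sint_cont[OF cq] by simp
  have cG: "continuous_on UNIV (G w)" for w
    unfolding G_def by (intro continuous_intros sint_cont csq)
  have qb: "\<bar>q w t\<bar> \<le> (H + P * norm w) * E t" for w t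
  proof -
    have "\<bar>q w t\<bar> \<le> \<bar>h t\<bar> + \<bar>p t\<bar> * (E t * \<bar>apply_bcontfun w t\<bar>)"
      unfolding q_def using Epos[of t] by (simp add: abs_mult order_trans[OF abs_triangle_ineq4])
    also have "\<dots> \<le> H * E t + P * (E t * norm w)"
    proof (rule add_mono)
      have "H \<le> H * E t" using mult_left_mono[OF E1[of t] H0] by simp
      then show "\<bar>h t\<bar> \<le> H * E t"
        using hb[of t] by linarith
      have e: "E t * \<bar>apply_bcontfun w t\<bar> \<le> E t * norm w"
        using norm_bounded[of w t] Epos[of t] by (intro mult_left_mono) auto
      show "\<bar>p t\<bar> * (E t * \<bar>apply_bcontfun w t\<bar>) \<le> P * (E t * norm w)"
        using mult_mono[OF pb[of t] e P0] Epos[of t] by simp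
    qed
    also have "\<dots> = (H + P * norm w) * E t" by (simp add: algebra_simps)
    finally show ?thesis .
  qed
  have Gb: "\<bar>sint (\<lambda>s. sint g s) x\<bar> \<le> K * E x / (L * L)"
    if cg: "continuous_on UNIV g" and gb: "\<And>t. \<bar>g t\<bar> \<le> K * E t" for g K x
  proof -
    have "\<bar>sint g s\<bar> \<le> (K / L) * exp (L * \<bar>s\<bar>)" for s
      using sint_bound[OF cg L0, of K s] gb by (simp add: E_def)
    then have "\<bar>sint (\<lambda>s. sint g s) x\<bar> \<le> (K / L) * exp (L * \<bar>x\<bar>) / L"
      using sint_bound[OF _ L0, of "\<lambda>s. sint g s" "K / L" x] sint_cont[OF cg] by simp
    then show ?thesis by (simp add: E_def)
  qed
  have mem: "(\<lambda>x. G w x / E x) \<in> bcontfun" for w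
  proof (rule bcontfun_normI)
    show "continuous_on UNIV (\<lambda>x. G w x / E x)"
      using Epos by (intro continuous_intros cG cE) (auto simp: less_imp_neq[symmetric])
    fix x
    have "\<bar>G w x\<bar> \<le> \<bar>a\<bar> + \<bar>b\<bar> * \<bar>x\<bar> + (H + P * norm w) * E x / (L * L)"
      unfolding G_def using Gb[OF cq qb, of w x] abs_triangle_ineq[of "a + b*x"] abs_triangle_ineq[of a "b*x"] abs_mult[of b x]
      by linarith
    also have "\<dots> \<le> \<bar>a\<bar> * E x + \<bar>b\<bar> * E x + (H + P * norm w) / (L * L) * E x"
    proof -
      have h1: "\<bar>a\<bar> \<le> \<bar>a\<bar> * E x" using mult_left_mono[OF E1[of x], of "\<bar>a\<bar>"] by simp
      have h2: "\<bar>b\<bar> * \<bar>x\<bar> \<le> \<bar>b\<bar> * E x"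
        using mult_left_mono[OF exp_ge_abs[OF L1, of x], of "\<bar>b\<bar>"] by (simp add: E_def)
      show ?thesis using h1 h2 by simp
    qed
    also have "\<dots> = (\<bar>a\<bar> + \<bar>b\<bar> + (H + P * norm w) / (L * L)) * E x"
      by (simp add: algebra_simps)
    finally show "norm (G w x / E x) \<le> \<bar>a\<bar> + \<bar>b\<bar> + (H + P * norm w) / (L * L)"
      using Epos[of x] by (simp add: divide_le_eq abs_div)
  qed
  define T where "T w = Bcontfun (\<lambda>x. G w x / E x)" for w
  have Tapp: "apply_bcontfun (T w) x = G w x / E x" for w x
    unfolding T_def using Bcontfun_inverse[OF mem] by simp
  have contr: "dist (T w1) (T w2) \<le> 1/2 * dist w1 w2" for w1 w2
  proof (rule dist_bound)
    fix x
    define d where "d = dist w1 w2"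
    have d0: "d \<ge> 0" by (simp add: d_def)
    define r where "r t = p t * E t * (apply_bcontfun w2 t - apply_bcontfun w1 t)" for t
    have cr: "continuous_on UNIV r" unfolding r_def by (intro continuous_intros cp cE) auto
    have rb: "\<bar>r t\<bar> \<le> (P * d) * E t" for t
    proof -
      have diff: "\<bar>apply_bcontfun w2 t - apply_bcontfun w1 t\<bar> \<le> d"
        using dist_bounded[of w2 t w1] by (simp add: d_def dist_real_def dist_commute)
      have "\<bar>p t\<bar> * E t \<le> P * E t" using mult_right_mono[OF pb[of t]] Epos[of t] by simp
      then have "\<bar>p t\<bar> * E t * \<bar>apply_bcontfun w2 t - apply_bcontfun w1 t\<bar> \<le> P * E t * d"
        using mult_mono[OF _ diff] P0 Epos[of t] by simp
      moreover have "\<bar>r t\<bar> = \<bar>p t\<bar> * E t * \<bar>apply_bcontfun w2 t - apply_bcontfun w1 t\<bar>"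
        using Epos[of t] by (simp add: r_def abs_mult)
      ultimately show ?thesis by (simp add: mult.commute mult.left_commute)
    qed
    have "G w1 x - G w2 x = sint (\<lambda>s. sint (q w1) s) x - sint (\<lambda>s. sint (q w2) s) x"
      by (simp add: G_def)
    also have "\<dots> = sint (\<lambda>s. sint (q w1) s - sint (q w2) s) x"
      by (rule sint_diff[symmetric]) (intro csq)+
    also have "(\<lambda>s. sint (q w1) s - sint (q w2) s) = (\<lambda>s. sint r s)"
    proof
      fix s
      have "sint (q w1) s - sint (q w2) s = sint (\<lambda>t. q w1 t - q w2 t) s"
        by (rule sint_diff[symmetric]) (intro cq)+
      also have "(\<lambda>t. q w1 t - q w2 t) = r"
        by (auto simp: q_def r_def algebra_simps)
      finally show "sint (q w1) s - sint (q w2) s = sint r s" .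
    qed
    finally have "\<bar>G w1 x - G w2 x\<bar> \<le> P * d * E x / (L * L)"
      using Gb[OF cr rb] by simp
    also have "\<dots> \<le> (d / 2) * E x"
    proof -
      have LL0: "L * L > 0" using L0 by simp
      have "2 * P * d \<le> L * L * d" using mult_right_mono[OF LL d0] .
      then have pd: "P * d / (L * L) \<le> d / 2" using LL0 by (simp add: pos_divide_le_eq mult.commute mult.left_commute)
      have "P * d * E x / (L * L) = (P * d / (L * L)) * E x" by simp
      then show ?thesis using mult_right_mono[OF pd less_imp_le[OF Epos[of x]]] by simp
    qed
    finally have "\<bar>G w1 x - G w2 x\<bar> / E x \<le> d / 2" using Epos[of x] by (simp add: divide_le_eq)
    then show "dist (apply_bcontfun (T w1) x) (apply_bcontfun (T w2) x) \<le> 1 / 2 * dist w1 w2"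
      using Epos[of x] by (simp add: Tapp dist_real_def d_def diff_divide_distrib[symmetric] abs_div)
  qed
  obtain w where w: "T w = w"
    using banach_fix_type[of "1/2" T] contr by auto
  have wx: "apply_bcontfun w x = G w x / E x" for x
    using Tapp[of w x] w by simp
  define y where "y = G w"
  have qy: "q w t = h t - p t * y t" for t
    using wx[of t] Epos[of t] by (simp add: q_def y_def)
  define y' where "y' x = b + sint (q w) x" for x
  have "(y has_real_derivative y' x) (at x)" for x
    unfolding y_def G_def y'_def
    by (auto intro!: derivative_eq_intros sint_deriv csq)
  moreover have "(y' has_real_derivative (h x - p x * y x)) (at x)" for x
    unfolding y'_def qy[symmetric]
    by (auto intro!: derivative_eq_intros sint_deriv cq)
  moreover have "y 0 = a" "y' 0 = b" by (simp_all add: y_def G_def y'_def)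
  ultimately show ?thesis by blast
qed

lemma two_ab_le: "2 * \<bar>a\<bar> * \<bar>b\<bar> \<le> a\<^sup>2 + (b::real)\<^sup>2"
proof -
  have "0 \<le> (\<bar>a\<bar> - \<bar>b\<bar>)\<^sup>2" by simp
  then show ?thesis by (simp add: power2_diff)
qed

lemma ivp_unique0:
  fixes p w w' :: "real \<Rightarrow> real"
  assumes pb: "\<And>x. \<bar>p x\<bar> \<le> P"
    and d1: "\<And>x. (w has_real_derivative w' x) (at x)"
    and d2: "\<And>x. (w' has_real_derivative (- p x * w x)) (at x)"
    and i0: "w 0 = 0" "w' 0 = 0"
  shows "w x = 0"
proof -
  define K where "K = 1 + P"
  have P0: "P \<ge> 0" using pb[of 0] by simp
  define En where "En y = (w y)\<^sup>2 + (w' y)\<^sup>2" for y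
  define En' where "En' y = 2 * w y * w' y + 2 * w' y * (- p y * w y)" for y
  have dE: "(En has_real_derivative En' y) (at y)" for y
    unfolding En_def En'_def by (auto intro!: derivative_eq_intros d1 d2)
  have Eb: "\<bar>En' y\<bar> \<le> K * En y" for y
  proof -
    have "En' y = (2 * \<bar>w y\<bar> * \<bar>w' y\<bar>) * (1 - p y) \<or> En' y = - ((2 * \<bar>w y\<bar> * \<bar>w' y\<bar>) * (1 - p y))"
      unfolding En'_def by (cases "w y \<ge> 0"; cases "w' y \<ge> 0") (auto simp: algebra_simps)
    then have "\<bar>En' y\<bar> = (2 * \<bar>w y\<bar> * \<bar>w' y\<bar>) * \<bar>1 - p y\<bar>"
      by (auto simp: abs_mult)
    also have "\<dots> \<le> En y * K"
      apply (rule mult_mono)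
      using two_ab_le[of "w y" "w' y"] pb[of y] P0 by (auto simp: En_def K_def)
    finally show ?thesis by (simp add: mult.commute)
  qed
  have E0: "En 0 = 0" by (simp add: En_def i0)
  have Enn: "En y \<ge> 0" for y by (simp add: En_def)
  have "En x = 0"
  proof (cases "0 \<le> x")
    case True
    have "En x * exp (- K * x) \<le> En 0 * exp (- K * 0)"
      apply (rule DERIV_nonpos_imp_nonincreasing[OF True])
      subgoal for y
        apply (rule exI[where x="(En' y - K * En y) * exp (- K * y)"])
        using Eb[of y] by (auto intro!: derivative_eq_intros dE simp: algebra_simps mult_nonneg_nonpos2)
      done
    then show ?thesis using E0 Enn[of x] by (simp add: mult_le_0_iff)
  next
    case False
    then have x0: "x \<le> 0" by simp
    have "En x * exp (K * x) \<le> En 0 * exp (K * 0)"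
      apply (rule DERIV_nonneg_imp_nondecreasing[OF x0])
      subgoal for y
        apply (rule exI[where x="(En' y + K * En y) * exp (K * y)"])
        apply (rule conjI)
         apply (auto intro!: derivative_eq_intros dE simp: algebra_simps)[1]
        using Eb[of y] by (intro mult_nonneg_nonneg) (auto simp: abs_le_iff)
      done
    then show ?thesis using E0 Enn[of x] by (simp add: mult_le_0_iff)
  qed
  then show ?thesis by (simp add: En_def add_nonneg_eq_0_iff)
qed

lemma ivp_unique:
  fixes p h y y' z z' :: "real \<Rightarrow> real"
  assumes pb: "\<And>x. \<bar>p x\<bar> \<le> P"
    and dy1: "\<And>x. (y has_real_derivative y' x) (at x)"
    and dy2: "\<And>x. (y' has_real_derivative (h x - p x * y x)) (at x)"
    and dz1: "\<And>x. (z has_real_derivative z' x) (at x)"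
    and dz2: "\<And>x. (z' has_real_derivative (h x - p x * z x)) (at x)"
    and i0: "y 0 = z 0" "y' 0 = z' 0"
  shows "y x = z x"
proof -
  have a: "((\<lambda>x. y x - z x) has_real_derivative y' x - z' x) (at x)" for x
    by (auto intro!: derivative_eq_intros dy1 dz1)
  have b: "((\<lambda>x. y' x - z' x) has_real_derivative - p x * (y x - z x)) (at x)" for x
    using DERIV_diff[OF dy2[of x] dz2[of x]] by (simp add: algebra_simps)
  have "(\<lambda>x. y x - z x) x = 0"
    by (rule ivp_unique0[where w="\<lambda>x. y x - z x" and w'="\<lambda>x. y' x - z' x", OF pb a b])
       (use i0 in auto)
  then show ?thesis by simp
qed

lemma ivp_periodic:
  fixes p h y y' :: "real \<Rightarrow> real"
  assumes pb: "\<And>x. \<bar>p x\<bar> \<le> P"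
    and pp: "\<And>x. p (x + 1) = p x" and hp: "\<And>x. h (x + 1) = h x"
    and dy1: "\<And>x. (y has_real_derivative y' x) (at x)"
    and dy2: "\<And>x. (y' has_real_derivative (h x - p x * y x)) (at x)"
    and i0: "y 1 = y 0" "y' 1 = y' 0"
  shows "y (x + 1) = y x"
proof (rule ivp_unique[OF pb _ _ dy1 dy2])
  show "((\<lambda>x. y (x + 1)) has_real_derivative y' (x + 1)) (at x)" for x
    using dy1[of "x + 1"] by (simp add: DERIV_shift)
  show "((\<lambda>x. y' (x + 1)) has_real_derivative h x - p x * y (x + 1)) (at x)" for x
    using dy2[of "x + 1"] by (simp add: DERIV_shift pp hp)
qed (use i0 in auto)

lemma periodic_solution:
  fixes p h :: "real \<Rightarrow> real"
  assumes cp: "continuous_on UNIV p" and ch: "continuous_on UNIV h"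
    and pb: "\<And>x. \<bar>p x\<bar> \<le> P" and hb: "\<And>x. \<bar>h x\<bar> \<le> H"
    and pp: "\<And>x. p (x + 1) = p x" and hp: "\<And>x. h (x + 1) = h x"
    and nohom: "\<And>z z'. \<forall>x. (z has_real_derivative z' x) (at x) \<and>
                   (z' has_real_derivative (- p x * z x)) (at x) \<Longrightarrow>
                 \<forall>x. z (x + 1) = z x \<Longrightarrow> \<forall>x. z x = 0"
  shows "\<exists>y y'. (\<forall>x. (y has_real_derivative y' x) (at x) \<and>
            (y' has_real_derivative (h x - p x * y x)) (at x)) \<and> (\<forall>x. y (x + 1) = y x)"
proof -
  have c0: "continuous_on UNIV (\<lambda>x::real. 0::real)" by simp
  have hb0: "\<And>x::real. \<bar>(\<lambda>x. 0::real) x\<bar> \<le> 0" by simp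
  obtain yp yp' where yp: "\<forall>x. (yp has_real_derivative yp' x) (at x) \<and>
            (yp' has_real_derivative (h x - p x * yp x)) (at x)" and yp0: "yp 0 = 0" "yp' 0 = 0"
    using ivp_exists[OF cp ch pb hb, of 0 0] by blast
  obtain y1 y1' where y1: "\<forall>x. (y1 has_real_derivative y1' x) (at x) \<and>
            (y1' has_real_derivative (0 - p x * y1 x)) (at x)" and y10: "y1 0 = 1" "y1' 0 = 0"
    using ivp_exists[OF cp c0 pb hb0, of 1 0] by blast
  obtain y2 y2' where y2: "\<forall>x. (y2 has_real_derivative y2' x) (at x) \<and>
            (y2' has_real_derivative (0 - p x * y2 x)) (at x)" and y20: "y2 0 = 0" "y2' 0 = 1"
    using ivp_exists[OF cp c0 pb hb0, of 0 1] by blast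
  have comb: "\<forall>x. ((\<lambda>x. a * y1 x + b * y2 x) has_real_derivative (a * y1' x + b * y2' x)) (at x) \<and>
     ((\<lambda>x. a * y1' x + b * y2' x) has_real_derivative (- p x * (a * y1 x + b * y2 x))) (at x)" for a b
  proof
    fix x
    show "((\<lambda>x. a * y1 x + b * y2 x) has_real_derivative (a * y1' x + b * y2' x)) (at x) \<and>
     ((\<lambda>x. a * y1' x + b * y2' x) has_real_derivative (- p x * (a * y1 x + b * y2 x))) (at x)"
      using y1 y2 by (auto intro!: derivative_eq_intros simp: algebra_simps)
  qed
  define m11 where "m11 = y1 1 - 1"
  define m12 where "m12 = y2 1"
  define m21 where "m21 = y1' 1"
  define m22 where "m22 = y2' 1 - 1"
  define det where "det = m11 * m22 - m12 * m21"
  show ?thesis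
  proof (cases "det = 0")
    case False
    define a where "a = (- yp 1 * m22 + m12 * yp' 1) / det"
    define b where "b = (- m11 * yp' 1 + m21 * yp 1) / det"
    have "m11 * a + m12 * b = (m11 * (- yp 1 * m22 + m12 * yp' 1) + m12 * (- m11 * yp' 1 + m21 * yp 1)) / det"
      by (simp add: a_def b_def add_divide_distrib)
    also have "\<dots> = (- yp 1 * det) / det"
      by (rule arg_cong[where f="\<lambda>u. u / det"]) (simp add: det_def algebra_simps)
    finally have e1: "m11 * a + m12 * b = - yp 1" using False by simp
    have "m21 * a + m22 * b = (m21 * (- yp 1 * m22 + m12 * yp' 1) + m22 * (- m11 * yp' 1 + m21 * yp 1)) / det"
      by (simp add: a_def b_def add_divide_distrib)
    also have "\<dots> = (- yp' 1 * det) / det"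
      by (rule arg_cong[where f="\<lambda>u. u / det"]) (simp add: det_def algebra_simps)
    finally have e2: "m21 * a + m22 * b = - yp' 1" using False by simp
    define y where "y x = yp x + (a * y1 x + b * y2 x)" for x
    define y' where "y' x = yp' x + (a * y1' x + b * y2' x)" for x
    have dy: "\<forall>x. (y has_real_derivative y' x) (at x) \<and>
            (y' has_real_derivative (h x - p x * y x)) (at x)"
    proof
      fix x
      show "(y has_real_derivative y' x) (at x) \<and> (y' has_real_derivative (h x - p x * y x)) (at x)"
      proof -
        from yp have a1: "(yp has_real_derivative yp' x) (at x)"
          and a2: "(yp' has_real_derivative (h x - p x * yp x)) (at x)" by blast+
        from comb[of a b] have b1: "((\<lambda>x. a * y1 x + b * y2 x) has_real_derivative (a * y1' x + b * y2' x)) (at x)"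
          and b2: "((\<lambda>x. a * y1' x + b * y2' x) has_real_derivative (- p x * (a * y1 x + b * y2 x))) (at x)"
          by blast+
        show ?thesis
          unfolding y_def[abs_def] y'_def[abs_def]
          apply (rule conjI)
           apply (rule DERIV_add[OF a1 b1])
          apply (rule DERIV_cong[OF DERIV_add[OF a2 b2]])
          by (simp add: algebra_simps)
      qed
    qed
    have "y 1 = y 0" "y' 1 = y' 0"
      using e1 e2 yp0 y10 y20
      by (auto simp: y_def y'_def m11_def m12_def m21_def m22_def algebra_simps)
    then have "\<forall>x. y (x + 1) = y x"
      using ivp_periodic[where p=p and h=h and P=P and y=y and y'=y', OF pb pp hp] dy by blast
    then show ?thesis using dy by blast
  next
    case True
    obtain a b where ab: "(a, b) \<noteq> (0, 0)" "m11 * a + m12 * b = 0" "m21 * a + m22 * b = 0"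
    proof (cases "(m11, m12) \<noteq> (0, 0)")
      case True
      then show ?thesis using \<open>det = 0\<close>
        by (intro that[of m12 "- m11"]) (auto simp: det_def algebra_simps)
    next
      case c2: False
      show ?thesis
      proof (cases "(m22, m21) \<noteq> (0, 0)")
        case True
        then show ?thesis using c2
          by (intro that[of m22 "- m21"]) (auto simp: algebra_simps)
      next
        case False
        then show ?thesis using c2 by (intro that[of 1 0]) auto
      qed
    qed
    define z where "z x = a * y1 x + b * y2 x" for x
    define z' where "z' x = a * y1' x + b * y2' x" for x
    have dz: "\<forall>x. (z has_real_derivative z' x) (at x) \<and> (z' has_real_derivative (- p x * z x)) (at x)"
      using comb[of a b] unfolding z_def[abs_def] z'_def[abs_def] by simp
    have hb00: "\<And>x::real. \<bar>(\<lambda>x. 0::real) x\<bar> \<le> 0" by simp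
    have dz0: "\<forall>x. (z has_real_derivative z' x) (at x) \<and> (z' has_real_derivative ((\<lambda>x. 0) x - p x * z x)) (at x)"
      using dz by simp
    have "z 1 = z 0" "z' 1 = z' 0"
      using ab y10 y20
      by (auto simp: z_def z'_def m11_def m12_def m21_def m22_def algebra_simps)
    then have "\<forall>x. z (x + 1) = z x"
      using ivp_periodic[where p=p and h="\<lambda>x. 0" and P=P and y=z and y'=z', OF pb pp] dz0 by auto
    then have z0: "\<forall>x. z x = 0" using nohom dz by blast
    have "(z has_real_derivative 0) (at 0)"
      using z0 by (simp add: z0[rule_format, abs_def] del: z0)
    moreover have "(z has_real_derivative z' 0) (at 0)" using dz by blast
    ultimately have "z' 0 = 0" using DERIV_unique by blast
    moreover have "z 0 = 0" using z0 by blast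
    ultimately have "a = 0" "b = 0" using y10 y20 by (auto simp: z_def z'_def)
    then show ?thesis using ab by simp
  qed
qed

abbreviation I01 :: "(real \<Rightarrow> real) \<Rightarrow> real" where
  "I01 f \<equiv> integral {0..1} f"

lemma cint: "continuous_on {0..1} f \<Longrightarrow> (f::real\<Rightarrow>real) integrable_on {0..1::real}"
  by (rule integrable_continuous_real)

lemma cs_integral:
  fixes u v :: "real \<Rightarrow> real"
  assumes cu: "continuous_on {0..1} u" and cv: "continuous_on {0..1} v"
  shows "(I01 (\<lambda>x. u x * v x))\<^sup>2 \<le> I01 (\<lambda>x. (u x)\<^sup>2) * I01 (\<lambda>x. (v x)\<^sup>2)"
proof -
  define a where "a = I01 (\<lambda>x. (u x)\<^sup>2)"
  define b where "b = I01 (\<lambda>x. u x * v x)"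
  define c where "c = I01 (\<lambda>x. (v x)\<^sup>2)"
  have ia: "((\<lambda>x. (u x)\<^sup>2) has_integral a) {0..1}" unfolding a_def
    by (intro integrable_integral cint continuous_intros cu)
  have ib: "((\<lambda>x. u x * v x) has_integral b) {0..1}" unfolding b_def
    by (intro integrable_integral cint continuous_intros cu cv)
  have ic: "((\<lambda>x. (v x)\<^sup>2) has_integral c) {0..1}" unfolding c_def
    by (intro integrable_integral cint continuous_intros cv)
  have q: "0 \<le> a - 2 * t * b + t\<^sup>2 * c" for t
  proof -
    have "((\<lambda>x. (u x)\<^sup>2 - (2 * t) * (u x * v x) + t\<^sup>2 * (v x)\<^sup>2) has_integral (a - (2 * t) * b + t\<^sup>2 * c)) {0..1}"
      by (intro has_integral_add has_integral_diff has_integral_mult_right ia ib ic)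
    moreover have "(\<lambda>x. (u x)\<^sup>2 - (2 * t) * (u x * v x) + t\<^sup>2 * (v x)\<^sup>2) = (\<lambda>x. (u x - t * v x)\<^sup>2)"
      by (auto simp: power2_eq_square algebra_simps)
    ultimately have "((\<lambda>x. (u x - t * v x)\<^sup>2) has_integral (a - (2 * t) * b + t\<^sup>2 * c)) {0..1}" by simp
    then show ?thesis by (rule has_integral_nonneg) simp
  qed
  have c0: "c \<ge> 0" using ic by (rule has_integral_nonneg) simp
  have "b\<^sup>2 \<le> a * c"
  proof (cases "c = 0")
    case True
    have "b = 0"
    proof (rule ccontr)
      assume "b \<noteq> 0"
      then have "0 \<le> a - 2 * ((a + 1) / (2 * b)) * b" using q[of "(a + 1) / (2 * b)"] True by simp
      then show False using \<open>b \<noteq> 0\<close> by simp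
    qed
    then show ?thesis using True by simp
  next
    case False
    then have cp: "c > 0" using c0 by simp
    have "0 \<le> a - 2 * (b / c) * b + (b / c)\<^sup>2 * c" by (rule q)
    also have "\<dots> = a - b\<^sup>2 / c" using cp by (simp add: power2_eq_square field_simps)
    finally show ?thesis using cp by (simp add: field_simps)
  qed
  then show ?thesis by (simp add: a_def b_def c_def)
qed

lemma ip01_cont:
  assumes "continuous_on {0..1} f" "continuous_on {0..1} g"
  shows "ip01 f g = I01 (\<lambda>x. f x * g x)"
  unfolding ip01_def
  by (intro lebesgue_integral_eq_integral continuous_imp_integrable_real continuous_intros assms) auto

lemma L2_cont:
  assumes "continuous_on {0..1} f"
  shows "L2_01 f"
  unfolding L2_01_def
  by (intro conjI continuous_imp_measurable_on_sets_lebesgue continuous_imp_integrable_real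
      continuous_intros assms) auto

lemma parseval:
  fixes psi :: "nat \<Rightarrow> real \<Rightarrow> real"
  assumes onb: "ONB01 psi" and cpsi: "\<And>n. continuous_on {0..1} (psi n)"
    and cf: "continuous_on {0..1} f" and cg: "continuous_on {0..1} g"
  shows "(\<lambda>N. \<Sum>n<N. I01 (\<lambda>x. f x * psi n x) * I01 (\<lambda>x. g x * psi n x)) \<longlonglongrightarrow> I01 (\<lambda>x. f x * g x)"
proof -
  define S where "S N x = (\<Sum>n<N. I01 (\<lambda>x. f x * psi n x) * psi n x)" for N x
  have cS: "continuous_on {0..1} (S N)" for N
    unfolding S_def by (intro continuous_intros cpsi)
  have cr: "continuous_on {0..1} (\<lambda>x. f x - S N x)" for N
    by (intro continuous_intros cS cf)
  have "(\<lambda>N. ip01 (\<lambda>x. f x - (\<Sum>n<N. ip01 f (psi n) * psi n x))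
                   (\<lambda>x. f x - (\<Sum>n<N. ip01 f (psi n) * psi n x))) \<longlonglongrightarrow> 0"
    using onb L2_cont[OF cf] unfolding ONB01_def by blast
  moreover have "ip01 f (psi n) = I01 (\<lambda>x. f x * psi n x)" for n
    by (rule ip01_cont[OF cf cpsi])
  ultimately have "(\<lambda>N. ip01 (\<lambda>x. f x - S N x) (\<lambda>x. f x - S N x)) \<longlonglongrightarrow> 0"
    by (simp add: S_def)
  moreover have "ip01 (\<lambda>x. f x - S N x) (\<lambda>x. f x - S N x) = I01 (\<lambda>x. (f x - S N x)\<^sup>2)" for N
    using ip01_cont[OF cr cr] by (simp add: power2_eq_square)
  ultimately have Q: "(\<lambda>N. I01 (\<lambda>x. (f x - S N x)\<^sup>2)) \<longlonglongrightarrow> 0" by simp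
  define e where "e N = I01 (\<lambda>x. (f x - S N x) * g x)" for N
  have eq: "e N = I01 (\<lambda>x. f x * g x) - (\<Sum>n<N. I01 (\<lambda>x. f x * psi n x) * I01 (\<lambda>x. g x * psi n x))" for N
  proof -
    have "e N = I01 (\<lambda>x. f x * g x) - I01 (\<lambda>x. S N x * g x)"
      unfolding e_def
      by (subst integral_diff[symmetric]) (auto intro!: cint continuous_intros cS cf cg simp: algebra_simps)
    also have "I01 (\<lambda>x. S N x * g x) = (\<Sum>n<N. I01 (\<lambda>x. I01 (\<lambda>x. f x * psi n x) * (g x * psi n x)))"
      unfolding S_def sum_distrib_right
      by (subst Henstock_Kurzweil_Integration.integral_sum)
         (auto intro!: cint continuous_intros cpsi cg simp: algebra_simps)
    also have "\<dots> = (\<Sum>n<N. I01 (\<lambda>x. f x * psi n x) * I01 (\<lambda>x. g x * psi n x))"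
      by simp
    finally show ?thesis .
  qed
  have "(\<lambda>N. (e N)\<^sup>2) \<longlonglongrightarrow> 0"
  proof (rule Lim_null_comparison)
    show "\<forall>\<^sub>F N in sequentially. norm ((e N)\<^sup>2) \<le> I01 (\<lambda>x. (f x - S N x)\<^sup>2) * I01 (\<lambda>x. (g x)\<^sup>2)"
      unfolding e_def using cs_integral[OF cr cg] by simp
    show "(\<lambda>N. I01 (\<lambda>x. (f x - S N x)\<^sup>2) * I01 (\<lambda>x. (g x)\<^sup>2)) \<longlonglongrightarrow> 0"
      using tendsto_mult_left_zero[OF Q] by simp
  qed
  then have "(\<lambda>N. sqrt ((e N)\<^sup>2)) \<longlonglongrightarrow> sqrt 0" by (rule tendsto_real_sqrt)
  then have "(\<lambda>N. \<bar>e N\<bar>) \<longlonglongrightarrow> 0" by simp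
  then have "e \<longlonglongrightarrow> 0" by (simp add: tendsto_rabs_zero_iff)
  then have "(\<lambda>N. I01 (\<lambda>x. f x * g x) - e N) \<longlonglongrightarrow> I01 (\<lambda>x. f x * g x) - 0"
    by (intro tendsto_intros)
  then show ?thesis by (simp add: eq)
qed

lemma per1_nat: "per1 f \<Longrightarrow> f (x + real n) = f x"
  by (induction n arbitrary: x) (auto simp: per1_def add.assoc[symmetric])

lemma per1_int: "per1 f \<Longrightarrow> f (x + real_of_int k) = f x"
proof (cases "k \<ge> 0")
  case True
  assume p: "per1 f"
  then show ?thesis using per1_nat[OF p, of x "nat k"] True by simp
next
  case False
  assume p: "per1 f"
  have "f (x + real_of_int k + real (nat (- k))) = f (x + real_of_int k)" by (rule per1_nat[OF p])
  then show ?thesis using False by simp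
qed

lemma per1_frac: "per1 f \<Longrightarrow> f x = f (frac x)"
  using per1_int[of f "frac x" "\<lfloor>x\<rfloor>"] by (simp add: frac_def)

lemma frac_01: "frac x \<in> {0..1}"
  using frac_lt_1[of x] by auto

lemma per1_bounded:
  assumes p: "per1 f" and c: "continuous_on UNIV f"
  shows "\<exists>B. \<forall>x. \<bar>f x\<bar> \<le> B"
proof -
  have "compact (f ` {0..1})"
    by (rule compact_continuous_image) (auto intro: continuous_on_subset[OF c])
  then obtain B where B: "\<forall>y\<in>f ` {0..1}. norm y \<le> B"
    using compact_imp_bounded bounded_iff by metis
  have "\<bar>f x\<bar> \<le> B" for x
    using B frac_01[of x] per1_frac[OF p, of x] by auto
  then show ?thesis by blast
qed

lemma per1_zero: "per1 f \<Longrightarrow> (\<forall>x\<in>{0..1}. f x = 0) \<Longrightarrow> f x = 0"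
  using per1_frac[of f x] frac_01[of x] by auto

lemma deriv_has: "f differentiable at x \<Longrightarrow> (f has_real_derivative deriv f x) (at x)"
  by (simp add: DERIV_deriv_iff_real_differentiable)

lemma has_diff: "(f has_real_derivative d) (at x) \<Longrightarrow> f differentiable at x"
  using DERIV_deriv_iff_real_differentiable DERIV_imp_deriv by metis

lemma per1_deriv:
  assumes p: "per1 f" and d: "\<And>x. f differentiable at x"
  shows "per1 (deriv f)"
  unfolding per1_def
proof
  fix x
  have "(f has_real_derivative deriv f (x + 1)) (at (x + 1))" by (rule deriv_has[OF d])
  then have "((\<lambda>x. f (x + 1)) has_real_derivative deriv f (x + 1)) (at x)" by (simp add: DERIV_shift)
  moreover have "(\<lambda>x. f (x + 1)) = f" using p by (auto simp: per1_def)
  ultimately show "deriv f (x + 1) = deriv f x" using DERIV_imp_deriv by metis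
qed

lemma td_cont:
  assumes "twice_diff f"
  shows "continuous_on UNIV f" "continuous_on UNIV (deriv f)"
  using assms unfolding twice_diff_def
  by (meson continuous_at_imp_continuous_on differentiable_imp_continuous_within)+

lemma green:
  fixes f f' f'' g g' g'' :: "real \<Rightarrow> real"
  assumes f1: "\<And>x. (f has_real_derivative f' x) (at x)" and f2: "\<And>x. (f' has_real_derivative f'' x) (at x)"
    and g1: "\<And>x. (g has_real_derivative g' x) (at x)" and g2: "\<And>x. (g' has_real_derivative g'' x) (at x)"
    and p: "f 1 = f 0" "f' 1 = f' 0" "g 1 = g 0" "g' 1 = g' 0"
  shows "((\<lambda>x. f'' x * g x - f x * g'' x) has_integral 0) {0..1}"
proof -
  define F where "F x = f' x * g x - f x * g' x" for x
  have "(F has_real_derivative (f'' x * g x - f x * g'' x)) (at x)" for x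
    unfolding F_def by (auto intro!: derivative_eq_intros f1 f2 g1 g2 simp: algebra_simps)
  then have "((\<lambda>x. f'' x * g x - f x * g'' x) has_integral F 1 - F 0) {0..1}"
    by (intro fundamental_theorem_of_calculus)
       (auto simp: has_real_derivative_iff_has_vector_derivative[symmetric] intro: has_field_derivative_at_within)
  then show ?thesis using p by (simp add: F_def)
qed

lemma int_zero_cont:
  assumes c: "continuous_on {0..1} f" and z: "I01 (\<lambda>x. (f x)\<^sup>2) = 0" and x: "x \<in> {0..1}"
  shows "f x = (0::real)"
proof -
  have "((\<lambda>x. (f x)\<^sup>2) has_integral 0) (cbox 0 1)"
    using z integrable_integral[OF cint[of "\<lambda>x. (f x)\<^sup>2"]] c
    by (auto intro!: continuous_intros)
  then have "(\<lambda>x. (f x)\<^sup>2) x = 0"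
    by (rule has_integral_0_cbox_imp_0[rotated 2]) (use x c in \<open>auto intro!: continuous_intros\<close>)
  then show ?thesis by simp
qed

context
  fixes D \<kappa> :: real and U :: "real \<Rightarrow> real"
    and lam :: "nat \<Rightarrow> real" and psi :: "nat \<Rightarrow> real \<Rightarrow> real"
  assumes D: "D > 0" and kap: "\<kappa> > 0" and ss: "steady_state D \<kappa> U"
    and eig: "\<forall>n. local_eigpair D \<kappa> U (lam n) (psi n)" and onb: "ONB01 psi"
begin

lemma U_per: "per1 U" and U_cont: "continuous_on UNIV U"
  using ss td_cont[of U] by (auto simp: steady_state_def)

lemma Z_pos: "Zc U > 0"
proof -
  obtain B where B: "\<forall>x. \<bar>U x\<bar> \<le> B" using per1_bounded[OF U_per U_cont] by blast
  have "I01 (\<lambda>x. exp (- B)) \<le> I01 (\<lambda>x. exp (U x))"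
  proof (rule integral_le)
    show "exp (- B) \<le> exp (U x)" for x using B[rule_format, of x] by (simp add: abs_le_iff)
  qed (auto intro!: cint continuous_intros continuous_on_subset[OF U_cont])
  moreover have "I01 (\<lambda>x. exp (- B)) = exp (- B)" by simp
  ultimately have "exp (- B) \<le> Zc U" by (simp add: Zc_def)
  then show ?thesis by (meson exp_gt_zero less_le_trans)
qed

lemma M_pos: "Mc \<kappa> U > 0"
  using Z_pos kap by (simp add: Mc_def)

lemma A_cont: "continuous_on UNIV (Acoef \<kappa> U)"
  unfolding Acoef_def[abs_def] using Z_pos
  by (intro continuous_intros U_cont) auto

lemma A_per: "per1 (Acoef \<kappa> U)"
  using U_per by (simp add: per1_def Acoef_def)

lemma C_cont: "continuous_on UNIV (Cf U)"
  unfolding Cf_def[abs_def] by (intro continuous_intros U_cont)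

lemma C_per: "per1 (Cf U)"
  using U_per by (simp add: per1_def Cf_def)

lemma psi_per: "per1 (psi n)" and psi_td: "twice_diff (psi n)"
  and psi_eq: "\<And>x. D * deriv (deriv (psi n)) x + (Acoef \<kappa> U x - lam n) * psi n x = 0"
  using eig by (auto simp: local_eigpair_def)

lemma psi_cont: "continuous_on {0..1} (psi n)"
  using td_cont(1)[OF psi_td] continuous_on_subset by blast

lemma proj:
  fixes \<phi> g :: "real \<Rightarrow> real"
  assumes pp: "per1 \<phi>" and td: "twice_diff \<phi>" and cg: "continuous_on UNIV g"
    and eq: "\<And>x. D * deriv (deriv \<phi>) x + (Acoef \<kappa> U x - \<mu>) * \<phi> x = g x"
  shows "(lam n - \<mu>) * I01 (\<lambda>x. \<phi> x * psi n x) = I01 (\<lambda>x. g x * psi n x)"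
proof -
  let ?s = "psi n" and ?l = "lam n"
  have f1: "(\<phi> has_real_derivative deriv \<phi> x) (at x)" for x
    using td deriv_has by (auto simp: twice_diff_def)
  have f2: "(deriv \<phi> has_real_derivative deriv (deriv \<phi>) x) (at x)" for x
    using td deriv_has by (auto simp: twice_diff_def)
  have g1: "(?s has_real_derivative deriv ?s x) (at x)" for x
    using psi_td deriv_has by (auto simp: twice_diff_def)
  have g2: "(deriv ?s has_real_derivative deriv (deriv ?s) x) (at x)" for x
    using psi_td deriv_has by (auto simp: twice_diff_def)
  have pd1: "per1 (deriv \<phi>)" using per1_deriv[OF pp] td by (auto simp: twice_diff_def)
  have pd2: "per1 (deriv ?s)" using per1_deriv[OF psi_per] psi_td by (auto simp: twice_diff_def)
  have per: "\<phi> 1 = \<phi> 0" "deriv \<phi> 1 = deriv \<phi> 0" "?s 1 = ?s 0" "deriv ?s 1 = deriv ?s 0"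
    using pp pd1 psi_per[of n] pd2 unfolding per1_def by (metis add_0)+
  have G: "((\<lambda>x. deriv (deriv \<phi>) x * ?s x - \<phi> x * deriv (deriv ?s) x) has_integral 0) {0..1}"
    by (rule green[OF f1 f2 g1 g2 per])
  have pt: "deriv (deriv \<phi>) x * ?s x - \<phi> x * deriv (deriv ?s) x
      = (g x * ?s x - (?l - \<mu>) * (\<phi> x * ?s x)) / D" for x
  proof -
    have a: "deriv (deriv \<phi>) x = (g x - (Acoef \<kappa> U x - \<mu>) * \<phi> x) / D"
      using eq[of x] D by (simp add: field_simps)
    have b: "deriv (deriv ?s) x = (- (Acoef \<kappa> U x - ?l) * ?s x) / D"
      using psi_eq[of n x] D by (simp add: field_simps)
    show ?thesis unfolding a b using D by (simp add: field_simps)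
  qed
  have G': "((\<lambda>x. (g x * ?s x - (?l - \<mu>) * (\<phi> x * ?s x)) / D) has_integral 0) {0..1}"
    using G unfolding pt .
  have cphi: "continuous_on {0..1} \<phi>" using td_cont(1)[OF td] continuous_on_subset by blast
  have cg': "continuous_on {0..1} g" using cg continuous_on_subset by blast
  have i1: "((\<lambda>x. g x * ?s x) has_integral I01 (\<lambda>x. g x * ?s x)) {0..1}"
    by (intro integrable_integral cint continuous_intros cg' psi_cont)
  have i2: "((\<lambda>x. \<phi> x * ?s x) has_integral I01 (\<lambda>x. \<phi> x * ?s x)) {0..1}"
    by (intro integrable_integral cint continuous_intros cphi psi_cont)
  have "((\<lambda>x. (g x * ?s x - (?l - \<mu>) * (\<phi> x * ?s x)) / D) has_integral
      (I01 (\<lambda>x. g x * ?s x) - (?l - \<mu>) * I01 (\<lambda>x. \<phi> x * ?s x)) / D) {0..1}"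
    by (intro has_integral_divide has_integral_diff has_integral_mult_right i1 i2)
  with G' have "(I01 (\<lambda>x. g x * ?s x) - (?l - \<mu>) * I01 (\<lambda>x. \<phi> x * ?s x)) / D = 0"
    using has_integral_unique by blast
  then show ?thesis using D by simp
qed

lemma zero_fun:
  fixes \<phi> :: "real \<Rightarrow> real"
  assumes pp: "per1 \<phi>" and c: "continuous_on UNIV \<phi>"
    and z: "\<And>n. I01 (\<lambda>x. \<phi> x * psi n x) = 0"
  shows "\<phi> x = 0"
proof -
  have c1: "continuous_on {0..1} \<phi>" using c continuous_on_subset by blast
  have "(\<lambda>N. \<Sum>n<N. I01 (\<lambda>x. \<phi> x * psi n x) * I01 (\<lambda>x. \<phi> x * psi n x)) \<longlonglongrightarrow> I01 (\<lambda>x. \<phi> x * \<phi> x)"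
    by (rule parseval[OF onb psi_cont c1 c1])
  then have "(\<lambda>N. 0::real) \<longlonglongrightarrow> I01 (\<lambda>x. \<phi> x * \<phi> x)" by (simp add: z)
  then have "I01 (\<lambda>x. \<phi> x * \<phi> x) = 0" using LIMSEQ_unique tendsto_const by blast
  then have "I01 (\<lambda>x. (\<phi> x)\<^sup>2) = 0" by (simp add: power2_eq_square)
  then have "\<forall>x\<in>{0..1}. \<phi> x = 0" using int_zero_cont[OF c1] by blast
  then show ?thesis by (rule per1_zero[OF pp])
qed


lemma dir1:
  assumes nl: "nonlocal_eig D \<kappa> U \<nu>" and nr: "\<nu> \<notin> range lam"
  shows "(\<lambda>n. (integral {0..1} (\<lambda>y. Cf U y * psi n y))\<^sup>2 / (lam n - \<nu>)) sums (1 / Mc \<kappa> U)"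
proof -
  obtain \<phi> where pp: "per1 \<phi>" and td: "twice_diff \<phi>" and nz: "\<exists>x. \<phi> x \<noteq> 0"
    and eq: "\<forall>x. D * deriv (deriv \<phi>) x + (Acoef \<kappa> U x - \<nu>) * \<phi> x =
          Mc \<kappa> U * Cf U x * integral {0..1} (\<lambda>y. Cf U y * \<phi> y)"
    using nl by (auto simp: nonlocal_eig_def)
  define c where "c = I01 (\<lambda>y. Cf U y * \<phi> y)"
  define M where "M = Mc \<kappa> U"
  define \<beta> where "\<beta> n = I01 (\<lambda>y. Cf U y * psi n y)" for n
  have M0: "M > 0" using M_pos by (simp add: M_def)
  have ln: "lam n - \<nu> \<noteq> 0" for n using nr by auto
  have cphi: "continuous_on UNIV \<phi>" using td_cont(1)[OF td] .
  have cC1: "continuous_on {0..1} (Cf U)" using C_cont continuous_on_subset by blast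
  have cphi1: "continuous_on {0..1} \<phi>" using cphi continuous_on_subset by blast
  have coef: "I01 (\<lambda>x. \<phi> x * psi n x) = M * c * \<beta> n / (lam n - \<nu>)" for n
  proof -
    have "(lam n - \<nu>) * I01 (\<lambda>x. \<phi> x * psi n x) = I01 (\<lambda>x. (M * Cf U x * c) * psi n x)"
      by (rule proj[OF pp td]) (use eq in \<open>auto intro!: continuous_intros C_cont simp: M_def c_def\<close>)
    also have "\<dots> = I01 (\<lambda>x. (M * c) * (Cf U x * psi n x))"
      by (simp add: algebra_simps)
    also have "\<dots> = M * c * \<beta> n" by (simp add: \<beta>_def)
    finally show ?thesis using ln[of n] by (simp add: field_simps)
  qed
  have c0: "c \<noteq> 0"
  proof
    assume "c = 0"
    then have "\<phi> x = 0" for x using coef by (intro zero_fun[OF pp cphi]) simp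
    then show False using nz by blast
  qed
  have "(\<lambda>N. \<Sum>n<N. I01 (\<lambda>x. Cf U x * psi n x) * I01 (\<lambda>x. \<phi> x * psi n x)) \<longlonglongrightarrow> I01 (\<lambda>x. Cf U x * \<phi> x)"
    by (rule parseval[OF onb psi_cont cC1 cphi1])
  moreover have "I01 (\<lambda>x. Cf U x * psi n x) * I01 (\<lambda>x. \<phi> x * psi n x) = (M * c) * ((\<beta> n)\<^sup>2 / (lam n - \<nu>))" for n
    unfolding coef by (simp add: \<beta>_def power2_eq_square)
  ultimately have "(\<lambda>N. (M * c) * (\<Sum>n<N. (\<beta> n)\<^sup>2 / (lam n - \<nu>))) \<longlonglongrightarrow> c"
    by (simp add: sum_distrib_left c_def)
  then have "(\<lambda>N. (1 / (M * c)) * ((M * c) * (\<Sum>n<N. (\<beta> n)\<^sup>2 / (lam n - \<nu>)))) \<longlonglongrightarrow> (1 / (M * c)) * c"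
    by (rule tendsto_mult_left)
  then have "(\<lambda>N. \<Sum>n<N. (\<beta> n)\<^sup>2 / (lam n - \<nu>)) \<longlonglongrightarrow> 1 / M"
    using c0 M0 by simp
  then show ?thesis by (simp add: sums_def \<beta>_def M_def)
qed

lemma dir2:
  assumes sm: "(\<lambda>n. (integral {0..1} (\<lambda>y. Cf U y * psi n y))\<^sup>2 / (lam n - \<nu>)) sums (1 / Mc \<kappa> U)"
    and nr: "\<nu> \<notin> range lam"
  shows "nonlocal_eig D \<kappa> U \<nu>"
proof -
  define M where "M = Mc \<kappa> U"
  define \<beta> where "\<beta> n = I01 (\<lambda>y. Cf U y * psi n y)" for n
  have M0: "M > 0" using M_pos by (simp add: M_def)
  have ln: "lam n - \<nu> \<noteq> 0" for n using nr by auto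
  define p where "p x = (Acoef \<kappa> U x - \<nu>) / D" for x
  define h where "h x = M * Cf U x / D" for x
  have cp: "continuous_on UNIV p" unfolding p_def[abs_def] using D
    by (intro continuous_intros A_cont) auto
  have ch: "continuous_on UNIV h" unfolding h_def[abs_def] using D
    by (intro continuous_intros C_cont) auto
  have pp: "\<And>x. p (x + 1) = p x" using A_per by (simp add: p_def per1_def)
  have hp: "\<And>x. h (x + 1) = h x" using C_per by (simp add: h_def per1_def)
  obtain P where pb: "\<And>x. \<bar>p x\<bar> \<le> P" using per1_bounded[OF _ cp] pp by (auto simp: per1_def)
  obtain H where hb: "\<And>x. \<bar>h x\<bar> \<le> H" using per1_bounded[OF _ ch] hp by (auto simp: per1_def)
  have td_of: "twice_diff z \<and> (\<forall>x. deriv (deriv z) x = r x)"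
    if "\<forall>x. (z has_real_derivative z' x) (at x) \<and> (z' has_real_derivative r x) (at x)" for z z' r
  proof -
    have dz: "deriv z = z'" using that DERIV_imp_deriv by blast
    show ?thesis unfolding twice_diff_def dz using that has_diff DERIV_imp_deriv by blast
  qed
  have nohom: "\<forall>x. z x = 0"
    if dz: "\<forall>x. (z has_real_derivative z' x) (at x) \<and> (z' has_real_derivative (- p x * z x)) (at x)"
      and zp: "\<forall>x. z (x + 1) = z x" for z z'
  proof -
    have t: "twice_diff z \<and> (\<forall>x. deriv (deriv z) x = - p x * z x)" by (rule td_of[OF dz])
    have pz: "per1 z" using zp by (simp add: per1_def)
    have cz: "continuous_on UNIV z" using td_cont(1) t by blast
    have "I01 (\<lambda>x. z x * psi n x) = 0" for n
    proof -
      have "(lam n - \<nu>) * I01 (\<lambda>x. z x * psi n x) = I01 (\<lambda>x. (\<lambda>x. 0) x * psi n x)"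
        by (rule proj[OF pz]) (use t D in \<open>auto simp: p_def\<close>)
      then show ?thesis using ln[of n] by simp
    qed
    then show ?thesis using zero_fun[OF pz cz] by blast
  qed
  have "\<exists>y y'. (\<forall>x. (y has_real_derivative y' x) (at x) \<and>
            (y' has_real_derivative (h x - p x * y x)) (at x)) \<and> (\<forall>x. y (x + 1) = y x)"
    apply (rule periodic_solution[OF cp ch pb hb pp hp])
    using nohom by blast
  then obtain y y' where dy: "\<forall>x. (y has_real_derivative y' x) (at x) \<and>
            (y' has_real_derivative (h x - p x * y x)) (at x)" and yp: "\<forall>x. y (x + 1) = y x"
    by blast
  have t: "twice_diff y \<and> (\<forall>x. deriv (deriv y) x = h x - p x * y x)" by (rule td_of[OF dy])
  have py: "per1 y" using yp by (simp add: per1_def)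
  have cy: "continuous_on UNIV y" using td_cont(1) t by blast
  have cy1: "continuous_on {0..1} y" using cy continuous_on_subset by blast
  have cC1: "continuous_on {0..1} (Cf U)" using C_cont continuous_on_subset by blast
  have yeq: "D * deriv (deriv y) x + (Acoef \<kappa> U x - \<nu>) * y x = M * Cf U x" for x
    using t D by (simp add: p_def h_def field_simps)
  have coef: "I01 (\<lambda>x. y x * psi n x) = M * \<beta> n / (lam n - \<nu>)" for n
  proof -
    have "(lam n - \<nu>) * I01 (\<lambda>x. y x * psi n x) = I01 (\<lambda>x. (M * Cf U x) * psi n x)"
      by (rule proj[OF py]) (use t yeq in \<open>auto intro!: continuous_intros C_cont\<close>)
    also have "\<dots> = I01 (\<lambda>x. M * (Cf U x * psi n x))"
      by (simp add: algebra_simps)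
    also have "\<dots> = M * \<beta> n" by (simp add: \<beta>_def)
    finally show ?thesis using ln[of n] by (simp add: field_simps)
  qed
  have "(\<lambda>N. \<Sum>n<N. I01 (\<lambda>x. Cf U x * psi n x) * I01 (\<lambda>x. y x * psi n x)) \<longlonglongrightarrow> I01 (\<lambda>x. Cf U x * y x)"
    by (rule parseval[OF onb psi_cont cC1 cy1])
  moreover have "I01 (\<lambda>x. Cf U x * psi n x) * I01 (\<lambda>x. y x * psi n x) = M * ((\<beta> n)\<^sup>2 / (lam n - \<nu>))" for n
    unfolding coef by (simp add: \<beta>_def power2_eq_square)
  ultimately have l1: "(\<lambda>N. M * (\<Sum>n<N. (\<beta> n)\<^sup>2 / (lam n - \<nu>))) \<longlonglongrightarrow> I01 (\<lambda>x. Cf U x * y x)"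
    by (simp add: sum_distrib_left)
  have "(\<lambda>N. \<Sum>n<N. (\<beta> n)\<^sup>2 / (lam n - \<nu>)) \<longlonglongrightarrow> 1 / M"
    using sm by (simp add: sums_def \<beta>_def M_def)
  then have "(\<lambda>N. M * (\<Sum>n<N. (\<beta> n)\<^sup>2 / (lam n - \<nu>))) \<longlonglongrightarrow> M * (1 / M)"
    by (rule tendsto_mult_left)
  then have l2: "(\<lambda>N. M * (\<Sum>n<N. (\<beta> n)\<^sup>2 / (lam n - \<nu>))) \<longlonglongrightarrow> 1" using M0 by simp
  have I1: "I01 (\<lambda>x. Cf U x * y x) = 1" using LIMSEQ_unique[OF l1 l2] .
  show ?thesis
    unfolding nonlocal_eig_def
  proof (intro exI[of _ y] conjI allI)
    show "per1 y" by (rule py)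
    show "twice_diff y" using t by blast
    show "\<exists>x. y x \<noteq> 0"
    proof (rule ccontr)
      assume "\<not> (\<exists>x. y x \<noteq> 0)"
      then have "I01 (\<lambda>x. Cf U x * y x) = 0" by simp
      then show False using I1 by simp
    qed
    fix x
    show "D * deriv (deriv y) x + (Acoef \<kappa> U x - \<nu>) * y x =
          Mc \<kappa> U * Cf U x * integral {0..1} (\<lambda>y'. Cf U y' * y y')"
      using yeq[of x] I1 by (simp add: M_def)
  qed
qed

end

theorem mainTheorem8:
  fixes D \<kappa> \<nu> :: real and U :: "real \<Rightarrow> real"
    and lam :: "nat \<Rightarrow> real" and psi :: "nat \<Rightarrow> real \<Rightarrow> real"
  assumes "D > 0" and "\<kappa> > 0" and "steady_state D \<kappa> U"
    and "\<forall>n. local_eigpair D \<kappa> U (lam n) (psi n)"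
    and "ONB01 psi"
    and "lam 0 > lam 1"
    and "\<forall>k. lam (2*k+1) \<ge> lam (2*k+2) \<and> lam (2*k+2) > lam (2*k+3)"
    and "\<nu> \<notin> range lam"
  shows "nonlocal_eig D \<kappa> U \<nu> \<longleftrightarrow>
    (\<lambda>n. (integral {0..1} (\<lambda>y. Cf U y * psi n y))\<^sup>2 / (lam n - \<nu>)) sums (1 / Mc \<kappa> U)"
  using dir1[OF assms(1-5) _ assms(8)] dir2[OF assms(1-5) _ assms(8)] by blast

end
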